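(* Let $N\ge 1$ and $K\ge 2$ be integers with $K$ even and $N$ divisible by $K$, put $m=N/K$, and let $\alpha\in[0,2]$. Let $S_0\subset S$ be the set of the $2m+1$ pure strategies $s^{(j)}=(j,\,2m-j,\,j,\,2m-j,\,\ldots,\,j,\,2m-j)'$ for $j=0,1,\ldots,2m$ (odd-indexed battlefields receive $j$, even-indexed battlefields receive $2m-j$). Then the mixed strategy that randomizes uniformly over $S_0$ is a symmetric equilibrium strategy of $\mathcal{B}_\alpha(N,K)$, and in the resulting equilibrium each player's expected payoff equals $\pi^*=K\cdot\frac{m+\alpha/2}{2m+1}$.
   Context: Fix integers $N\ge1$, $K\ge2$ and a real number $\alpha$. The Colonel Blotto game $\mathcal{B}_\alpha(N,K)$ is the two-player simultaneous-move game with players $A,B$, each with pure strategy set $S=\{s\in\{0,1,\ldots,N\}^K:\sum_{k=1}^K s_k=N\}$, in which the payoff of player $i$ at the pure profile $(s^i,s^{-i})$ is $\pi^i(s^i,s^{-i})=\sum_{k=1}^K\big(\mathbf 1[s^i_k>s^{-i}_k]+\tfrac{\alpha}{2}\mathbf 1[s^i_k=s^{-i}_k]\big)$ (here $-i$ denotes the opponent of $i$). Mixed strategies are probability distributions on $S$, and payoffs of mixed profiles are expected payoffs (players randomize independently). A Nash equilibrium is a mixed profile from which no player can raise her expected payoff by a unilateral deviation. A symmetric equilibrium strategy is a mixed strategy $\sigma$ such that $(\sigma,\sigma)$ is a Nash equilibrium. *)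

theory Defs
  imports "HOL-Probability.Probability"
begin

text \<open>Pure strategies: allocations s over battlefields indexed 0..K-1 (battlefield k+1 of the
paper is index k), represented as functions nat => nat that vanish outside {0..<K}.\<close>

definition pure_strats :: "nat \<Rightarrow> nat \<Rightarrow> (nat \<Rightarrow> nat) set" where
  "pure_strats N K = {s. (\<forall>k. k \<ge> K \<longrightarrow> s k = 0) \<and> (\<forall>k<K. s k \<le> N) \<and> (\<Sum>k<K. s k) = N}"

definition blotto_payoff :: "real \<Rightarrow> nat \<Rightarrow> (nat \<Rightarrow> nat) \<Rightarrow> (nat \<Rightarrow> nat) \<Rightarrow> real" where
  "blotto_payoff \<alpha> K s t =
     (\<Sum>k<K. (if s k > t k then 1 else 0) + (\<alpha> / 2) * (if s k = t k then 1 else 0))"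

definition mixed_strats :: "nat \<Rightarrow> nat \<Rightarrow> (nat \<Rightarrow> nat) pmf set" where
  "mixed_strats N K = {p. set_pmf p \<subseteq> pure_strats N K}"

definition exp_payoff :: "real \<Rightarrow> nat \<Rightarrow> (nat \<Rightarrow> nat) pmf \<Rightarrow> (nat \<Rightarrow> nat) pmf \<Rightarrow> real" where
  "exp_payoff \<alpha> K p q =
     measure_pmf.expectation (pair_pmf p q) (\<lambda>(s, t). blotto_payoff \<alpha> K s t)"

definition nash_eq :: "real \<Rightarrow> nat \<Rightarrow> nat \<Rightarrow> (nat \<Rightarrow> nat) pmf \<Rightarrow> (nat \<Rightarrow> nat) pmf \<Rightarrow> bool" where
  "nash_eq \<alpha> N K pA pB \<longleftrightarrow>
     pA \<in> mixed_strats N K \<and> pB \<in> mixed_strats N K \<and>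
     (\<forall>q \<in> mixed_strats N K. exp_payoff \<alpha> K q pB \<le> exp_payoff \<alpha> K pA pB) \<and>
     (\<forall>q \<in> mixed_strats N K. exp_payoff \<alpha> K q pA \<le> exp_payoff \<alpha> K pB pA)"

definition symmetric_eq_strategy :: "real \<Rightarrow> nat \<Rightarrow> nat \<Rightarrow> (nat \<Rightarrow> nat) pmf \<Rightarrow> bool" where
  "symmetric_eq_strategy \<alpha> N K \<sigma> \<longleftrightarrow> nash_eq \<alpha> N K \<sigma> \<sigma>"

text \<open>The strategy s^(j): odd-indexed battlefields (1,3,..; indices 0,2,..) get j,
  even-indexed battlefields get 2m-j.\<close>
definition s_alt :: "nat \<Rightarrow> nat \<Rightarrow> nat \<Rightarrow> (nat \<Rightarrow> nat)" where
  "s_alt K m j = (\<lambda>k. if k < K then (if even k then j else 2 * m - j) else 0)"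

end

theory Submission imports Defs begin

lemma col:
  fixes x M :: nat and a :: real
  shows "(\<Sum>j\<in>{0..M}. (if x > j then 1 else 0) + a * (if x = j then 1 else 0)) =
         real (min x (M+1)) + a * (if x \<le> M then 1 else 0)"
proof (induction M)
  case 0 then show ?case by auto
next
  case (Suc M)
  show ?case unfolding sum.atLeast0_atMost_Suc Suc by (auto simp: min_def)
qed

lemma alt_sum:
  fixes a b r :: nat
  shows "(\<Sum>k<2*r. if even k then a else b) = r * (a + b)"
  by (induction r) auto

lemma col2:
  fixes M :: nat and a :: real
  assumes "0 \<le> a"
  shows "real (min x (M+1)) + a * (if x \<le> M then 1 else 0) \<le> real x + a"
  using assms by auto

lemma Fsum:
  fixes K m :: nat and \<alpha> :: real and s :: "nat \<Rightarrow> nat"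
  shows "(\<Sum>j\<in>{0..2*m}. blotto_payoff \<alpha> K s (s_alt K m j)) =
     (\<Sum>k<K. real (min (s k) (2*m+1)) + \<alpha>/2 * (if s k \<le> 2*m then 1 else 0))"
proof -
  have "(\<Sum>j\<in>{0..2*m}. blotto_payoff \<alpha> K s (s_alt K m j)) =
     (\<Sum>k<K. \<Sum>j\<in>{0..2*m}. (if s k > s_alt K m j k then 1 else 0) + (\<alpha> / 2) * (if s k = s_alt K m j k then 1 else 0))"
    unfolding blotto_payoff_def by (rule sum.swap)
  also have "\<dots> = (\<Sum>k<K. real (min (s k) (2*m+1)) + \<alpha>/2 * (if s k \<le> 2*m then 1 else 0))"
  proof (rule sum.cong[OF refl])
    fix k assume k: "k \<in> {..<K}"
    show "(\<Sum>j\<in>{0..2*m}. (if s k > s_alt K m j k then 1 else 0) + (\<alpha> / 2) * (if s k = s_alt K m j k then 1 else 0)) =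
       real (min (s k) (2*m+1)) + \<alpha>/2 * (if s k \<le> 2*m then 1 else 0)"
    proof (cases "even k")
      case True
      then show ?thesis using k col[where x="s k" and M="2*m" and a="\<alpha>/2"] by (simp add: s_alt_def)
    next
      case False
      have "(\<Sum>j\<in>{0..2*m}. (if s k > s_alt K m j k then 1 else 0) + (\<alpha> / 2) * (if s k = s_alt K m j k then 1 else 0))
        = (\<Sum>j\<in>{0..2*m}. (if s k > 2*m - j then 1 else 0) + (\<alpha> / 2) * (if s k = 2*m - j then 1 else 0))"
        using k False by (simp add: s_alt_def)
      also have "\<dots> = (\<Sum>j\<in>{0..2*m}. (if s k > j then 1 else 0) + (\<alpha> / 2) * (if s k = j then 1 else 0))"
        using sum.atLeastAtMost_rev[of "\<lambda>j. (if s k > j then 1 else 0) + (\<alpha> / 2) * (if s k = j then (1::real) else 0)" 0 "2*m"]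
        by simp
      finally show ?thesis using col[where x="s k" and M="2*m" and a="\<alpha>/2"] by simp
    qed
  qed
  finally show ?thesis .
qed


lemma pure_fin: "finite (pure_strats N K)"
proof (rule inj_on_finite[where f="\<lambda>s. map s [0..<K]"])
  show "inj_on (\<lambda>s. map s [0..<K]) (pure_strats N K)"
  proof (rule inj_onI)
    fix s t assume s: "s \<in> pure_strats N K" and t: "t \<in> pure_strats N K"
      and e: "map s [0..<K] = map t [0..<K]"
    show "s = t"
    proof
      fix k show "s k = t k"
      proof (cases "k < K")
        case True then show ?thesis using e by (metis map_eq_conv atLeastLessThan_iff set_upt zero_le)
      next
        case False then show ?thesis using s t by (simp add: pure_strats_def)
      qed
    qed
  qed
  show "(\<lambda>s. map s [0..<K]) ` pure_strats N K \<subseteq> {xs. set xs \<subseteq> {..N} \<and> length xs = K}"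
    by (auto simp: pure_strats_def)
  show "finite {xs. set xs \<subseteq> {..N} \<and> length xs = K}"
    by (rule finite_lists_length_eq) simp
qed

theorem proposition1:
  fixes N K m :: nat and \<alpha> :: real
  assumes "N \<ge> 1" and "K \<ge> 2" and "even K" and "K dvd N" and "m = N div K"
    and "0 \<le> \<alpha>" and "\<alpha> \<le> 2"
  defines "S0 \<equiv> s_alt K m ` {0..2 * m}"
  shows "S0 \<subseteq> pure_strats N K \<and> card S0 = 2 * m + 1 \<and>
         symmetric_eq_strategy \<alpha> N K (pmf_of_set S0) \<and>
         exp_payoff \<alpha> K (pmf_of_set S0) (pmf_of_set S0) = K * ((m + \<alpha> / 2) / (2 * m + 1))"
proof -
  obtain r where r: "K = 2 * r" using assms(3) by blast
  have Nm: "N = K * m" using assms(4,5) by simp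
  have m1: "m \<ge> 1" using Nm assms(1) by (cases m) auto
  define P where "P = pure_strats N K"
  have Pfin: "finite P" unfolding P_def by (rule pure_fin)
  have S0P: "S0 \<subseteq> P"
  proof
    fix s assume "s \<in> S0"
    then obtain j where j: "j \<le> 2*m" and s: "s = s_alt K m j" unfolding S0_def by auto
    have "(\<Sum>k<K. s k) = (\<Sum>k<2*r. if even k then j else 2*m - j)"
      using r by (simp add: s s_alt_def)
    also have "\<dots> = N" using alt_sum[of j "2*m-j" r] j Nm r by simp
    finally have "(\<Sum>k<K. s k) = N" .
    moreover have "\<forall>k<K. s k \<le> N"
    proof (intro allI impI)
      fix k assume "k < K"
      have "2 * m \<le> K * m" using assms(2) by simp
      moreover have "s k \<le> 2 * m" using j by (auto simp: s s_alt_def)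
      ultimately show "s k \<le> N" using Nm by linarith
    qed
    ultimately show "s \<in> P" by (auto simp: P_def pure_strats_def s s_alt_def)
  qed
  have inj: "inj_on (s_alt K m) {0..2*m}"
  proof (rule inj_onI)
    fix i j assume "s_alt K m i = s_alt K m j"
    then have "s_alt K m i 0 = s_alt K m j 0" by simp
    then show "i = j" using assms(2) by (simp add: s_alt_def)
  qed
  have cardS0: "card S0 = 2*m+1" unfolding S0_def using card_image[OF inj] by simp
  have S0fin: "finite S0" and S0ne: "S0 \<noteq> {}" unfolding S0_def by auto
  define \<sigma> where "\<sigma> = pmf_of_set S0"
  define C where "C = real N + real K * \<alpha> / 2"
  define F where "F s = (\<Sum>t\<in>S0. blotto_payoff \<alpha> K s t)" for s
  have F_eq: "F s = (\<Sum>k<K. real (min (s k) (2*m+1)) + \<alpha>/2 * (if s k \<le> 2*m then 1 else 0))" for s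
    unfolding F_def S0_def by (simp add: sum.reindex[OF inj] Fsum)
  have sumN: "(\<Sum>k<K. real (s k)) = real N" if "s \<in> P" for s
    using that unfolding P_def pure_strats_def by (metis (mono_tags, lifting) mem_Collect_eq of_nat_sum)
  have F_le: "F s \<le> C" if "s \<in> P" for s
  proof -
    have "F s \<le> (\<Sum>k<K. real (s k) + \<alpha>/2)"
      unfolding F_eq by (rule sum_mono) (use col2[OF _ ] assms(6) in auto)
    also have "\<dots> = C" using sumN[OF that] by (simp add: sum.distrib C_def)
    finally show ?thesis .
  qed
  have F_eqC: "F s = C" if "s \<in> S0" for s
  proof -
    from that obtain j where j: "j \<le> 2*m" and s: "s = s_alt K m j" unfolding S0_def by auto
    have "\<forall>k. s k \<le> 2*m" using j by (auto simp: s s_alt_def)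
    then have "F s = (\<Sum>k<K. real (s k) + \<alpha>/2)"
      unfolding F_eq by (intro sum.cong) (auto simp: min_def le_Suc_eq)
    also have "\<dots> = C" using sumN[of s, OF subsetD[OF S0P that]] by (simp add: sum.distrib C_def)
    finally show ?thesis .
  qed
  have expq: "exp_payoff \<alpha> K q \<sigma> = (\<Sum>s\<in>P. pmf q s * F s) / real (2*m+1)"
    if q: "set_pmf q \<subseteq> P" for q
  proof -
    have "exp_payoff \<alpha> K q \<sigma> = (\<Sum>a\<in>P \<times> S0. pmf (pair_pmf q \<sigma>) a *\<^sub>R (case a of (s, t) \<Rightarrow> blotto_payoff \<alpha> K s t))"
      unfolding exp_payoff_def
      by (rule integral_measure_pmf) (use Pfin S0fin q S0fin S0ne in \<open>auto simp: \<sigma>_def\<close>)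
    also have "\<dots> = (\<Sum>s\<in>P. \<Sum>t\<in>S0. pmf q s * (1 / real (2*m+1)) * blotto_payoff \<alpha> K s t)"
      by (subst sum.cartesian_product, intro sum.cong refl) (auto simp: pmf_pair \<sigma>_def S0fin S0ne cardS0)
    also have "\<dots> = (\<Sum>s\<in>P. pmf q s * F s) / real (2*m+1)"
      by (simp add: F_def sum_distrib_left sum_divide_distrib)
    finally show ?thesis .
  qed
  have val: "C / real (2*m+1) = K * ((m + \<alpha> / 2) / (2 * m + 1))"
    unfolding C_def Nm by (simp add: field_simps)
  have le: "exp_payoff \<alpha> K q \<sigma> \<le> C / real (2*m+1)" if q: "set_pmf q \<subseteq> P" for q
  proof -
    have "(\<Sum>s\<in>P. pmf q s * F s) \<le> (\<Sum>s\<in>P. pmf q s * C)"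
      by (rule sum_mono) (simp add: F_le mult_left_mono pmf_nonneg)
    also have "\<dots> = C" using sum_pmf_eq_1[OF Pfin q] by (simp add: sum_distrib_right[symmetric])
    finally show ?thesis unfolding expq[OF q] by (simp add: divide_right_mono)
  qed
  have sset: "set_pmf \<sigma> \<subseteq> P" using S0P by (simp add: \<sigma>_def S0fin S0ne)
  have eq: "exp_payoff \<alpha> K \<sigma> \<sigma> = C / real (2*m+1)"
  proof -
    have "(\<Sum>s\<in>P. pmf \<sigma> s * F s) = (\<Sum>s\<in>P. pmf \<sigma> s * C)"
    proof (intro sum.cong refl)
      fix s assume "s \<in> P"
      show "pmf \<sigma> s * F s = pmf \<sigma> s * C"
        by (cases "s \<in> S0") (auto simp: F_eqC \<sigma>_def S0fin S0ne)
    qed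
    also have "\<dots> = C" using sum_pmf_eq_1[OF Pfin sset] by (simp add: sum_distrib_right[symmetric])
    finally show ?thesis unfolding expq[OF sset] by simp
  qed
  have "symmetric_eq_strategy \<alpha> N K \<sigma>"
    unfolding symmetric_eq_strategy_def nash_eq_def mixed_strats_def
    using sset le eq by (auto simp: P_def)
  then show ?thesis using S0P cardS0 eq val by (simp add: P_def \<sigma>_def)
qed

end
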